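(* Let $X=(X(t),t\in\mathbb{R}^d)$ be a real-valued centered isotropic Gaussian random field with continuous sample paths, whose covariance is $\mathrm{Cov}(X(s),X(t))=R_X(\|t-s\|)$ with $R_X:[0,\infty)\to\mathbb{R}$ nonincreasing. Then for any $a,b\in\mathbb{R}^d$, the straight-line path $\xi(u)=a+u(b-a)$, $0\le u\le1$, attains the supremum $$\sup_{\xi\in\mathcal{P}(a,b)}\ \min_{\mu\in M_1^+([0,1])}\int_0^1\!\!\int_0^1R_X(\|\xi(u)-\xi(v)\|)\,\mu(du)\mu(dv).$$
   Context: $\mathcal{P}(a,b)$ is the set of continuous maps $\xi:[0,1]\to\mathbb{R}^d$ with $\xi(0)=a$, $\xi(1)=b$. $M_1^+([0,1])$ is the set of Borel probability measures on $[0,1]$. (The reciprocal of this supremum is the exponent $C_X(a,b)$ in $\lim_{u\to\infty}u^{-2}\log P(\exists\,\xi\in\mathcal{P}(a,b): X(\xi(v))>u\ \forall v)=-\frac12C_X(a,b)$.) *)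

theory Defs
  imports "HOL-Probability.Probability"
begin

definition centered_gaussian_rv :: "'w measure \<Rightarrow> ('w \<Rightarrow> real) \<Rightarrow> bool" where
  "centered_gaussian_rv M Y \<longleftrightarrow>
     Y \<in> borel_measurable M \<and>
     ((AE \<omega> in M. Y \<omega> = 0) \<or> (\<exists>\<sigma>>0. distributed M lborel Y (normal_density 0 \<sigma>)))"

definition centered_gaussian_field :: "'w measure \<Rightarrow> ('a \<Rightarrow> 'w \<Rightarrow> real) \<Rightarrow> bool" where
  "centered_gaussian_field M X \<longleftrightarrow>
     (\<forall>t. X t \<in> borel_measurable M) \<and>
     (\<forall>F c. finite F \<longrightarrow> centered_gaussian_rv M (\<lambda>\<omega>. \<Sum>t\<in>F. c t * X t \<omega>))"

definition paths :: "'a::real_normed_vector \<Rightarrow> 'a \<Rightarrow> (real \<Rightarrow> 'a) set" where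
  "paths a b = {\<xi>. continuous_on {0..1} \<xi> \<and> \<xi> 0 = a \<and> \<xi> 1 = b}"

definition prob_measures_01 :: "real measure set" where
  "prob_measures_01 = {\<mu>. prob_space \<mu> \<and> sets \<mu> = sets (restrict_space borel {0..1})}"

definition path_energy :: "(real \<Rightarrow> real) \<Rightarrow> (real \<Rightarrow> 'a::real_normed_vector) \<Rightarrow> real" where
  "path_energy R \<xi> = (INF \<mu>\<in>prob_measures_01.
      \<integral>u. (\<integral>v. R (norm (\<xi> u - \<xi> v)) \<partial>\<mu>) \<partial>\<mu>)"

end

theory Submission
  imports Defs
begin

abbreviation "S01 \<equiv> restrict_space borel {0..1::real}"

lemma R_norm_meas:
  fixes R :: "real \<Rightarrow> real"
  assumes R: "\<forall>x y. 0 \<le> x \<longrightarrow> x \<le> y \<longrightarrow> R y \<le> R x"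
  shows "(\<lambda>x::'a::euclidean_space. R (norm x)) \<in> borel_measurable borel"
proof -
  define Rm where "Rm x = R (max 0 x)" for x
  have "mono (\<lambda>x. - Rm x)" unfolding mono_def Rm_def using R by auto
  then have "(\<lambda>x. - Rm x) \<in> borel_measurable borel" by (rule borel_measurable_mono)
  then have "(\<lambda>x. - (- Rm x)) \<in> borel_measurable borel" by measurable
  then have m: "Rm \<in> borel_measurable borel" by simp
  have "(\<lambda>x::'a. Rm (norm x)) \<in> borel_measurable borel"
    using measurable_compose[OF borel_measurable_norm m] by (simp add: o_def)
  then show ?thesis by (simp add: Rm_def)
qed

lemma F_meas:
  fixes R :: "real \<Rightarrow> real" and h :: "real \<Rightarrow> 'a::euclidean_space"
  assumes R: "\<forall>x y. 0 \<le> x \<longrightarrow> x \<le> y \<longrightarrow> R y \<le> R x"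
    and h: "h \<in> borel_measurable S01"
    and N: "sets N = sets S01" and N2: "sets N2 = sets S01"
  shows "(\<lambda>(u,v). R (norm (h u - h v))) \<in> borel_measurable (N \<Otimes>\<^sub>M N2)"
proof -
  have h1: "(\<lambda>p. h (fst p)) \<in> borel_measurable (S01 \<Otimes>\<^sub>M S01)"
    using measurable_compose[OF measurable_fst[of S01 S01] h] by (simp add: o_def)
  have h2: "(\<lambda>p. h (snd p)) \<in> borel_measurable (S01 \<Otimes>\<^sub>M S01)"
    using measurable_compose[OF measurable_snd[of S01 S01] h] by (simp add: o_def)
  have "(\<lambda>p. h (fst p) - h (snd p)) \<in> borel_measurable (S01 \<Otimes>\<^sub>M S01)"
    using borel_measurable_diff[OF h1 h2] .
  from measurable_compose[OF this R_norm_meas[OF R]]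
  have "(\<lambda>p. R (norm (h (fst p) - h (snd p)))) \<in> borel_measurable (S01 \<Otimes>\<^sub>M S01)" by simp
  moreover have "sets (N \<Otimes>\<^sub>M N2) = sets (S01 \<Otimes>\<^sub>M S01)"
    by (rule sets_pair_measure_cong[OF N N2])
  ultimately show ?thesis
    by (simp add: case_prod_beta' cong: measurable_cong_sets)
qed

lemma int_ge_min:
  fixes f :: "'b \<Rightarrow> real"
  assumes "prob_space M" "\<And>x. x \<in> space M \<Longrightarrow> c \<le> f x"
  shows "min 0 c \<le> integral\<^sup>L M f"
proof (cases "integrable M f")
  case True
  interpret prob_space M by fact
  have "integral\<^sup>L M (\<lambda>x. c) \<le> integral\<^sup>L M f"
    using True assms(2) by (intro integral_mono) auto
  then show ?thesis by (simp add: prob_space)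
next
  case False then show ?thesis by (simp add: not_integrable_integral_eq)
qed

lemma inner_meas:
  fixes R :: "real \<Rightarrow> real" and h :: "real \<Rightarrow> 'a::euclidean_space"
  assumes R: "\<forall>x y. 0 \<le> x \<longrightarrow> x \<le> y \<longrightarrow> R y \<le> R x"
    and h: "h \<in> borel_measurable S01"
    and N: "sets N = sets S01"
  shows "(\<lambda>v. R (norm (h u - h v))) \<in> borel_measurable N"
proof -
  have "(\<lambda>v. h u - h v) \<in> borel_measurable S01"
    using h by measurable
  from measurable_compose[OF this R_norm_meas[OF R]]
  show ?thesis by (simp cong: measurable_cong_sets[OF N refl])
qed

lemma cmp:
  fixes R :: "real \<Rightarrow> real" and h1 h2 :: "real \<Rightarrow> 'a::euclidean_space"
  assumes R: "\<forall>x y. 0 \<le> x \<longrightarrow> x \<le> y \<longrightarrow> R y \<le> R x"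
    and P: "prob_space N" and N: "sets N = sets S01"
    and h1: "h1 \<in> borel_measurable S01" and h2: "h2 \<in> borel_measurable S01"
    and b1: "\<And>u v. u \<in> {0..1} \<Longrightarrow> v \<in> {0..1} \<Longrightarrow> \<bar>R (norm (h1 u - h1 v))\<bar> \<le> C"
    and b2: "\<And>u v. u \<in> {0..1} \<Longrightarrow> v \<in> {0..1} \<Longrightarrow> \<bar>R (norm (h2 u - h2 v))\<bar> \<le> C"
    and le: "\<And>u v. u \<in> {0..1} \<Longrightarrow> v \<in> {0..1} \<Longrightarrow> R (norm (h1 u - h1 v)) \<le> R (norm (h2 u - h2 v))"
  shows "(\<integral>u. (\<integral>v. R (norm (h1 u - h1 v)) \<partial>N) \<partial>N) \<le> (\<integral>u. (\<integral>v. R (norm (h2 u - h2 v)) \<partial>N) \<partial>N)"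
proof -
  interpret prob_space N by fact
  have sp: "space N = {0..1}"
    using sets_eq_imp_space_eq[OF N] by simp
  have I: "integrable N (\<lambda>v. R (norm (h u - h v)))"
    if h: "h \<in> borel_measurable S01"
      and b: "\<And>u v. u \<in> {0..1} \<Longrightarrow> v \<in> {0..1} \<Longrightarrow> \<bar>R (norm (h u - h v))\<bar> \<le> C"
      and u: "u \<in> {0..1}" for h :: "real \<Rightarrow> 'a" and u
    by (rule integrable_const_bound[where B=C]) (use b u sp inner_meas[OF R h N] in auto)
  have O: "integrable N (\<lambda>u. \<integral>v. R (norm (h u - h v)) \<partial>N)"
    if h: "h \<in> borel_measurable S01"
      and b: "\<And>u v. u \<in> {0..1} \<Longrightarrow> v \<in> {0..1} \<Longrightarrow> \<bar>R (norm (h u - h v))\<bar> \<le> C"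
      for h :: "real \<Rightarrow> 'a"
  proof (rule integrable_const_bound[where B=C])
    show "(\<lambda>u. \<integral>v. R (norm (h u - h v)) \<partial>N) \<in> borel_measurable N"
      by (rule borel_measurable_lebesgue_integral) (rule F_meas[OF R h N N])
    have "norm (\<integral>v. R (norm (h u - h v)) \<partial>N) \<le> C" if u: "u \<in> {0..1}" for u
    proof -
      have "norm (\<integral>v. R (norm (h u - h v)) \<partial>N) \<le> (\<integral>v. norm (R (norm (h u - h v))) \<partial>N)"
        by (rule integral_norm_bound)
      also have "\<dots> \<le> (\<integral>v. C \<partial>N)"
        using I[OF h b u] b u sp by (intro integral_mono) auto
      finally show ?thesis by (simp add: prob_space)
    qed
    then show "AE u in N. norm (\<integral>v. R (norm (h u - h v)) \<partial>N) \<le> C"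
      using sp by auto
  qed
  show ?thesis
  proof (rule integral_mono)
    show "integrable N (\<lambda>u. \<integral>v. R (norm (h1 u - h1 v)) \<partial>N)" by (rule O[OF h1 b1])
    show "integrable N (\<lambda>u. \<integral>v. R (norm (h2 u - h2 v)) \<partial>N)" by (rule O[OF h2 b2])
    fix u assume "u \<in> space N"
    then have u: "u \<in> {0..1}" using sp by simp
    show "(\<integral>v. R (norm (h1 u - h1 v)) \<partial>N) \<le> (\<integral>v. R (norm (h2 u - h2 v)) \<partial>N)"
      using I[OF h1 b1 u] I[OF h2 b2 u] le u sp by (intro integral_mono) auto
  qed
qed

lemma reparam:
  fixes \<xi> :: "real \<Rightarrow> 'a::euclidean_space"
  assumes c: "continuous_on {0..1} \<xi>" and x0: "\<xi> 0 = a" and x1: "\<xi> 1 = b"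
  shows "\<exists>g. mono g \<and> (\<forall>s. g s \<in> {0..1}) \<and>
     (\<forall>s\<in>{0..1}. \<forall>t\<in>{0..1}. \<bar>s - t\<bar> * norm (b - a) \<le> norm (\<xi> (g s) - \<xi> (g t)))"
proof -
  define f where "f u = (\<xi> u - a) \<bullet> (b - a)" for u
  define L where "L = (b - a) \<bullet> (b - a)"
  have fc: "continuous_on {0..1} f" unfolding f_def by (intro continuous_intros c)
  have L0: "0 \<le> L" unfolding L_def by simp
  have f0: "f 0 = 0" and f1: "f 1 = L" unfolding f_def L_def using x0 x1 by auto
  define S where "S c = {u\<in>{0..1}. c * L \<le> f u}" for c
  define G where "G c = Inf (S c)" for c
  have Sne: "1 \<in> S c" if "c \<le> 1" for c
    using mult_right_mono[OF that L0] f1 unfolding S_def by auto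
  have Sbdd: "bdd_below (S c)" for c unfolding S_def by (auto intro: bdd_belowI[where m=0])
  have Scl: "closed (S c)" for c
  proof -
    have "S c = {0..1} \<inter> f -` {c * L..}" unfolding S_def by auto
    then show ?thesis using continuous_closed_preimage[OF fc] by simp
  qed
  have G: "G c \<in> S c" if "c \<le> 1" for c
    unfolding G_def using closed_contains_Inf[OF _ Sbdd Scl] Sne[OF that] by blast
  have Gf: "f (G c) = c * L" if c01: "0 \<le> c" "c \<le> 1" for c
  proof -
    have GS: "G c \<in> {0..1}" "c * L \<le> f (G c)" using G[OF c01(2)] unfolding S_def by auto
    have "continuous_on {0..G c} f" using GS by (intro continuous_on_subset[OF fc]) auto
    then obtain x where x: "0 \<le> x" "x \<le> G c" "f x = c * L"
      using IVT'[of f 0 "c * L" "G c"] GS f0 c01 L0 by (auto simp: zero_le_mult_iff)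
    then have "x \<in> S c" using GS unfolding S_def by auto
    then have "G c \<le> x" unfolding G_def by (rule cInf_lower[OF _ Sbdd])
    with x show ?thesis by simp
  qed
  have Gmono: "G c1 \<le> G c2" if "c1 \<le> c2" "c2 \<le> 1" for c1 c2
  proof -
    have "S c2 \<subseteq> S c1" unfolding S_def using that L0
      by (auto intro: order.trans[OF mult_right_mono])
    then show ?thesis unfolding G_def using Sne[OF that(2)] Sbdd by (intro cInf_superset_mono) auto
  qed
  define g where "g s = G (max 0 (min 1 s))" for s
  have "mono g" unfolding g_def mono_def by (intro allI impI Gmono) auto
  moreover have "\<forall>s. g s \<in> {0..1}" unfolding g_def using G unfolding S_def by auto
  moreover have "\<bar>s - t\<bar> * norm (b - a) \<le> norm (\<xi> (g s) - \<xi> (g t))"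
    if s: "s \<in> {0..1}" and t: "t \<in> {0..1}" for s t
  proof -
    have gs: "f (g s) = s * L" and gt: "f (g t) = t * L"
      unfolding g_def using Gf s t by auto
    have "(\<xi> (g s) - \<xi> (g t)) \<bullet> (b - a) = f (g s) - f (g t)"
      unfolding f_def by (simp add: inner_diff_left)
    also have "\<dots> = (s - t) * L" using gs gt by (simp add: algebra_simps)
    finally have e: "(\<xi> (g s) - \<xi> (g t)) \<bullet> (b - a) = (s - t) * L" .
    have "\<bar>s - t\<bar> * norm (b - a) * norm (b - a) = \<bar>(s - t) * L\<bar>"
      unfolding L_def by (simp add: abs_mult power2_norm_eq_inner[symmetric] power2_eq_square)
    also have "\<dots> \<le> norm (\<xi> (g s) - \<xi> (g t)) * norm (b - a)"
      using Cauchy_Schwarz_ineq2[of "\<xi> (g s) - \<xi> (g t)" "b - a"] e by simp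
    finally have *: "\<bar>s - t\<bar> * norm (b - a) * norm (b - a) \<le> norm (\<xi> (g s) - \<xi> (g t)) * norm (b - a)" .
    show ?thesis
    proof (cases "norm (b - a) = 0")
      case True then show ?thesis by simp
    next
      case False then have "norm (b - a) > 0" by simp
      with * show ?thesis by (simp add: mult_le_cancel_right)
    qed
  qed
  ultimately show ?thesis by blast
qed

lemma energy_le:
  fixes R :: "real \<Rightarrow> real" and \<xi> :: "real \<Rightarrow> 'a::euclidean_space"
  assumes R: "\<forall>x y. 0 \<le> x \<longrightarrow> x \<le> y \<longrightarrow> R y \<le> R x"
    and xi: "\<xi> \<in> paths a b"
  shows "path_energy R \<xi> \<le> path_energy R (\<lambda>u. a + u *\<^sub>R (b - a))"
proof -
  define l where "l = (\<lambda>u::real. a + u *\<^sub>R (b - a))"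
  have c: "continuous_on {0..1} \<xi>" "\<xi> 0 = a" "\<xi> 1 = b" using xi unfolding paths_def by auto
  have lc: "continuous_on {0..1} l" unfolding l_def by (intro continuous_intros)
  obtain g where gmono: "mono g" and g01: "\<forall>s. g s \<in> {0..1}"
    and gd: "\<forall>s\<in>{0..1}. \<forall>t\<in>{0..1}. \<bar>s - t\<bar> * norm (b - a) \<le> norm (\<xi> (g s) - \<xi> (g t))"
    using reparam[OF c] by blast
  have bnd: "\<exists>B. \<forall>u\<in>{0..1}. norm (h u) \<le> B" if "continuous_on {0..1::real} h" for h :: "real \<Rightarrow> 'a"
    using compact_imp_bounded[OF compact_continuous_image[OF that compact_Icc]]
    unfolding bounded_iff by auto
  obtain B1 where B1: "\<forall>u\<in>{0..1}. norm (\<xi> u) \<le> B1" using bnd[OF c(1)] by blast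
  obtain B2 where B2: "\<forall>u\<in>{0..1}. norm (l u) \<le> B2" using bnd[OF lc] by blast
  have rb: "R (2*B) \<le> R (norm (h u - h v)) \<and> R (norm (h u - h v)) \<le> R 0"
    if B: "\<forall>u\<in>{0..1}. norm (h u) \<le> B" and u: "u \<in> {0..1}" and v: "v \<in> {0..1}"
    for h :: "real \<Rightarrow> 'a" and B u v
  proof -
    have "norm (h u - h v) \<le> norm (h u) + norm (h v)" by (rule norm_triangle_ineq4)
    also have "\<dots> \<le> 2 * B" using bspec[OF B u] bspec[OF B v] by linarith
    finally show ?thesis using R by auto
  qed
  define C where "C = \<bar>R (2*B1)\<bar> + \<bar>R (2*B2)\<bar> + \<bar>R 0\<bar>"
  have g01': "g u \<in> {0..1}" for u using g01 by blast
  have B1g: "\<forall>u\<in>{0..1}. norm (\<xi> (g u)) \<le> B1" using B1 g01' by blast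
  have Cb1: "\<bar>R (norm (\<xi> (g u) - \<xi> (g v)))\<bar> \<le> C" if "u \<in> {0..1}" "v \<in> {0..1}" for u v
    using rb[OF B1g that] unfolding C_def by linarith
  have Cb2: "\<bar>R (norm (l u - l v))\<bar> \<le> C" if "u \<in> {0..1}" "v \<in> {0..1}" for u v
    using rb[OF B2 that] unfolding C_def by linarith
  have gm: "g \<in> measurable S01 S01"
    using g01 by (intro measurable_restrict_space2 measurable_restrict_space1 borel_measurable_mono gmono) auto
  have xim: "\<xi> \<in> borel_measurable S01" by (rule borel_measurable_continuous_on_restrict[OF c(1)])
  have lm: "l \<in> borel_measurable S01" by (rule borel_measurable_continuous_on_restrict[OF lc])
  have xigm: "(\<lambda>u. \<xi> (g u)) \<in> borel_measurable S01" by (rule measurable_compose[OF gm xim])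
  have ne: "prob_measures_01 \<noteq> {}"
  proof -
    have "return S01 0 \<in> prob_measures_01"
      unfolding prob_measures_01_def by (auto intro!: prob_space_return simp: space_restrict_space)
    then show ?thesis by blast
  qed
  have bdd: "bdd_below ((\<lambda>\<mu>. \<integral>u. (\<integral>v. R (norm (\<xi> u - \<xi> v)) \<partial>\<mu>) \<partial>\<mu>) ` prob_measures_01)"
  proof (rule bdd_belowI2)
    fix \<mu> assume "\<mu> \<in> prob_measures_01"
    then have P: "prob_space \<mu>" and sp: "space \<mu> = {0..1}"
      unfolding prob_measures_01_def using sets_eq_imp_space_eq[of \<mu> S01] by auto
    show "min 0 (min 0 (R (2*B1))) \<le> (\<integral>u. (\<integral>v. R (norm (\<xi> u - \<xi> v)) \<partial>\<mu>) \<partial>\<mu>)"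
      using P by (intro int_ge_min int_ge_min) (use rb[OF B1] sp in auto)
  qed
  show ?thesis
    unfolding path_energy_def l_def[symmetric]
  proof (rule cINF_greatest[OF ne])
    fix \<mu> assume "\<mu> \<in> prob_measures_01"
    then have P: "prob_space \<mu>" and N: "sets \<mu> = sets S01"
      unfolding prob_measures_01_def by auto
    interpret prob_space \<mu> by fact
    have gm': "g \<in> measurable \<mu> S01" using gm by (simp cong: measurable_cong_sets[OF N refl])
    define \<mu>' where "\<mu>' = distr \<mu> S01 g"
    have P': "prob_space \<mu>'" unfolding \<mu>'_def by (rule prob_space_distr[OF gm'])
    have N': "sets \<mu>' = sets S01" unfolding \<mu>'_def by simp
    have mem: "\<mu>' \<in> prob_measures_01" unfolding prob_measures_01_def using P' N' by auto
    have outm: "(\<lambda>u. \<integral>v. R (norm (\<xi> u - \<xi> v)) \<partial>\<mu>') \<in> borel_measurable S01"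
    proof -
      interpret P': prob_space \<mu>' by fact
      show ?thesis by (rule P'.borel_measurable_lebesgue_integral) (rule F_meas[OF R xim refl N'])
    qed
    have "(\<integral>u. (\<integral>v. R (norm (\<xi> u - \<xi> v)) \<partial>\<mu>') \<partial>\<mu>') = (\<integral>u. (\<integral>v. R (norm (\<xi> (g u) - \<xi> v)) \<partial>\<mu>') \<partial>\<mu>)"
      unfolding \<mu>'_def by (rule integral_distr[OF gm' outm[unfolded \<mu>'_def]])
    also have "\<dots> = (\<integral>u. (\<integral>v. R (norm (\<xi> (g u) - \<xi> (g v))) \<partial>\<mu>) \<partial>\<mu>)"
      unfolding \<mu>'_def by (subst integral_distr[OF gm' inner_meas[OF R xim refl]]) (rule refl)
    also have "\<dots> \<le> (\<integral>u. (\<integral>v. R (norm (l u - l v)) \<partial>\<mu>) \<partial>\<mu>)"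
    proof (rule cmp[OF R P N xigm lm Cb1 Cb2])
      fix u v :: real assume u: "u \<in> {0..1}" and v: "v \<in> {0..1}"
      have "norm (l u - l v) = \<bar>u - v\<bar> * norm (b - a)"
        unfolding l_def by (simp add: scaleR_diff_left[symmetric])
      also have "\<dots> \<le> norm (\<xi> (g u) - \<xi> (g v))" using gd u v by blast
      finally show "R (norm (\<xi> (g u) - \<xi> (g v))) \<le> R (norm (l u - l v))" using R by auto
    qed
    finally have le: "(\<integral>u. (\<integral>v. R (norm (\<xi> u - \<xi> v)) \<partial>\<mu>') \<partial>\<mu>') \<le> (\<integral>u. (\<integral>v. R (norm (l u - l v)) \<partial>\<mu>) \<partial>\<mu>)" .
    have "(INF \<mu>\<in>prob_measures_01. \<integral>u. (\<integral>v. R (norm (\<xi> u - \<xi> v)) \<partial>\<mu>) \<partial>\<mu>) \<le> (\<integral>u. (\<integral>v. R (norm (\<xi> u - \<xi> v)) \<partial>\<mu>') \<partial>\<mu>')"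
      by (rule cINF_lower[OF bdd mem])
    with le show "(INF \<mu>\<in>prob_measures_01. \<integral>u. (\<integral>v. R (norm (\<xi> u - \<xi> v)) \<partial>\<mu>) \<partial>\<mu>) \<le> (\<integral>u. (\<integral>v. R (norm (l u - l v)) \<partial>\<mu>) \<partial>\<mu>)"
      by linarith
  qed
qed

theorem proposition8p4:
  fixes M :: "'w measure" and X :: "'a::euclidean_space \<Rightarrow> 'w \<Rightarrow> real"
    and R :: "real \<Rightarrow> real" and a b :: 'a
  assumes "prob_space M"
    and "centered_gaussian_field M X"
    and "\<forall>\<omega>\<in>space M. continuous_on UNIV (\<lambda>t. X t \<omega>)"
    and "\<forall>s t. prob_space.expectation M (\<lambda>\<omega>. X s \<omega> * X t \<omega>) = R (norm (t - s))"
    and "\<forall>x y. 0 \<le> x \<longrightarrow> x \<le> y \<longrightarrow> R y \<le> R x"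
  shows "(\<lambda>u. a + u *\<^sub>R (b - a)) \<in> paths a b \<and>
         path_energy R (\<lambda>u. a + u *\<^sub>R (b - a)) = (SUP \<xi>\<in>paths a b. path_energy R \<xi>)"
proof -
  have lp: "(\<lambda>u. a + u *\<^sub>R (b - a)) \<in> paths a b"
    unfolding paths_def by (auto intro!: continuous_intros)
  have "(SUP \<xi>\<in>paths a b. path_energy R \<xi>) = path_energy R (\<lambda>u. a + u *\<^sub>R (b - a))"
    using lp energy_le[OF assms(5)] by (intro cSup_eq_maximum) auto
  with lp show ?thesis by simp
qed

end
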